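(* Let $M,N\ge 0$ and let $u\le w$ be elements of the poset of shuffles $W_{MN}$. Then the interval $[u,w]=\{v\in W_{MN}: u\le v\le w\}$ is isomorphic (as a poset) to a product $W_{M_1N_1}\times W_{M_2N_2}\times\cdots\times W_{M_kN_k}$ of posets of shuffles, for suitable $k\ge 1$ and $M_p,N_p\ge 0$.
   Context: Let $\mathcal{A}=\{a_1,\dots,a_M\}$ (lower alphabet) and $\mathcal{X}=\{x_1,\dots,x_N\}$ (upper alphabet) be disjoint finite sets. A shuffle word is a word (possibly empty) with distinct letters from $\mathcal{A}\cup\mathcal{X}$ such that the letters from $\mathcal{A}$ occurring in it appear in increasing order of subscripts, and likewise for the letters from $\mathcal{X}$. The poset of shuffles $W_{MN}$ is the set of all shuffle words over $\mathcal{A},\mathcal{X}$, partially ordered as the reflexive-transitive closure of the covering relation: $w$ is covered by $w'$ iff $w'$ is obtained from $w$ either by deleting a letter belonging to $\mathcal{A}$ or by inserting a letter belonging to $\mathcal{X}$ (in a position such that the result is a shuffle word). Its minimum is $a_1a_2\cdots a_M$ and its maximum is $x_1x_2\cdots x_N$. *)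

theory Defs
  imports Main
begin

text \<open>Letters: A i is the lower letter a_i, X j is the upper letter x_j (subscripts start at 1).\<close>
datatype letter = A nat | X nat

fun is_A :: "letter \<Rightarrow> bool" where
  "is_A (A i) = True" | "is_A (X j) = False"

fun idx :: "letter \<Rightarrow> nat" where
  "idx (A i) = i" | "idx (X j) = j"

definition shuffle_word :: "nat \<Rightarrow> nat \<Rightarrow> letter list \<Rightarrow> bool" where
  "shuffle_word M N w \<longleftrightarrow>
     distinct w \<and>
     set w \<subseteq> {A i | i. 1 \<le> i \<and> i \<le> M} \<union> {X j | j. 1 \<le> j \<and> j \<le> N} \<and>
     sorted_wrt (<) (map idx (filter is_A w)) \<and>
     sorted_wrt (<) (map idx (filter (\<lambda>l. \<not> is_A l) w))"

definition shuffles :: "nat \<Rightarrow> nat \<Rightarrow> letter list set" where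
  "shuffles M N = {w. shuffle_word M N w}"

definition shuffle_cover :: "nat \<Rightarrow> nat \<Rightarrow> letter list \<Rightarrow> letter list \<Rightarrow> bool" where
  "shuffle_cover M N w w' \<longleftrightarrow>
     w \<in> shuffles M N \<and> w' \<in> shuffles M N \<and>
     ((\<exists>i xs ys. w = xs @ A i # ys \<and> w' = xs @ ys) \<or>
      (\<exists>j xs ys. w = xs @ ys \<and> w' = xs @ X j # ys))"

definition shuffle_le :: "nat \<Rightarrow> nat \<Rightarrow> letter list \<Rightarrow> letter list \<Rightarrow> bool" where
  "shuffle_le M N u v \<longleftrightarrow> u \<in> shuffles M N \<and> v \<in> shuffles M N \<and> (shuffle_cover M N)\<^sup>*\<^sup>* u v"

definition shuffle_interval :: "nat \<Rightarrow> nat \<Rightarrow> letter list \<Rightarrow> letter list \<Rightarrow> letter list set" where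
  "shuffle_interval M N u w = {v \<in> shuffles M N. shuffle_le M N u v \<and> shuffle_le M N v w}"

definition prod_shuffles :: "(nat \<times> nat) list \<Rightarrow> letter list list set" where
  "prod_shuffles ds = {ws. length ws = length ds \<and>
      (\<forall>p < length ds. ws ! p \<in> shuffles (fst (ds ! p)) (snd (ds ! p)))}"

definition prod_le :: "(nat \<times> nat) list \<Rightarrow> letter list list \<Rightarrow> letter list list \<Rightarrow> bool" where
  "prod_le ds ws ws' \<longleftrightarrow> ws \<in> prod_shuffles ds \<and> ws' \<in> prod_shuffles ds \<and>
      (\<forall>p < length ds. shuffle_le (fst (ds ! p)) (snd (ds ! p)) (ws ! p) (ws' ! p))"

end

theory Submission
  imports Defs
begin


definition R :: "letter \<Rightarrow> letter \<Rightarrow> bool" where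
  "R a b \<longleftrightarrow> ((is_A a \<longleftrightarrow> is_A b) \<longrightarrow> idx a < idx b)"

definition ok :: "letter list \<Rightarrow> bool" where
  "ok v \<longleftrightarrow> distinct v \<and> sorted_wrt R v"

definition lec :: "letter list \<Rightarrow> letter list \<Rightarrow> bool" where
  "lec u v \<longleftrightarrow> (\<forall>l\<in>set v. is_A l \<longrightarrow> l \<in> set u) \<and> (\<forall>l\<in>set u. \<not> is_A l \<longrightarrow> l \<in> set v) \<and>
     filter (\<lambda>l. l \<in> set v) u = filter (\<lambda>l. l \<in> set u) v"

definition Lset :: "nat \<Rightarrow> nat \<Rightarrow> letter set" where
  "Lset M N = {A i | i. 1 \<le> i \<and> i \<le> M} \<union> {X j | j. 1 \<le> j \<and> j \<le> N}"

lemma sorted_R_iff: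
  "sorted_wrt R v \<longleftrightarrow> sorted_wrt (<) (map idx (filter is_A v)) \<and>
     sorted_wrt (<) (map idx (filter (\<lambda>l. \<not> is_A l) v))"
  by (induction v) (auto simp: R_def)

lemma shuffle_word_ok: "shuffle_word M N v \<longleftrightarrow> ok v \<and> set v \<subseteq> Lset M N"
  unfolding shuffle_word_def ok_def Lset_def sorted_R_iff by auto

lemma ok_filter: "ok v \<Longrightarrow> ok (filter P v)"
  unfolding ok_def by (simp add: sorted_wrt_filter)

lemma shuffle_word_filter: "shuffle_word M N v \<Longrightarrow> shuffle_word M N (filter P v)"
  unfolding shuffle_word_ok using ok_filter by auto

lemma filter_neq_id[simp]: "a \<notin> set xs \<Longrightarrow> filter (\<lambda>l. l \<noteq> a) xs = xs"
  by (induction xs) auto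

lemma filter_comm: "filter P (filter Q xs) = filter Q (filter P xs)"
  by (induction xs) auto

lemma lec_refl: "lec u u"
  unfolding lec_def by (simp add: filter_id_conv)

lemma lec_del:
  assumes "lec u (xs @ A i # ys)" "distinct (xs @ A i # ys)"
  shows "lec u (xs @ ys)"
proof -
  have 1: "filter (\<lambda>l. l \<in> set (xs @ ys)) u = filter (\<lambda>l. l \<noteq> A i) (filter (\<lambda>l. l \<in> set (xs @ A i # ys)) u)"
    unfolding filter_filter using assms(2) by (intro filter_cong) auto
  have 2: "filter (\<lambda>l. l \<noteq> A i) (xs @ A i # ys) = xs @ ys"
    using assms(2) by simp
  have 3: "filter (\<lambda>l. l \<in> set (xs @ A i # ys)) u = filter (\<lambda>l. l \<in> set u) (xs @ A i # ys)"
    using assms(1) unfolding lec_def by blast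
  have "filter (\<lambda>l. l \<in> set (xs @ ys)) u = filter (\<lambda>l. l \<noteq> A i) (filter (\<lambda>l. l \<in> set u) (xs @ A i # ys))"
    unfolding 1 3 by (rule refl)
  also have "\<dots> = filter (\<lambda>l. l \<in> set u) (filter (\<lambda>l. l \<noteq> A i) (xs @ A i # ys))"
    by (rule filter_comm)
  also have "\<dots> = filter (\<lambda>l. l \<in> set u) (xs @ ys)" using 2 by simp
  finally show ?thesis using assms unfolding lec_def by auto
qed

lemma lec_ins:
  assumes "lec u (xs @ ys)" "distinct (xs @ X j # ys)"
  shows "lec u (xs @ X j # ys)"
proof -
  have nu: "X j \<notin> set u" using assms unfolding lec_def by auto
  have "filter (\<lambda>l. l \<in> set (xs @ X j # ys)) u = filter (\<lambda>l. l \<in> set (xs @ ys)) u"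
    using nu by (intro filter_cong) auto
  then show ?thesis using assms nu unfolding lec_def by auto
qed

lemma cover_lec: "shuffle_le M N u w \<Longrightarrow> lec u w"
  unfolding shuffle_le_def
proof (elim conjE)
  assume "(shuffle_cover M N)\<^sup>*\<^sup>* u w"
  then show "lec u w"
  proof (induction rule: rtranclp_induct)
    case base then show ?case by (rule lec_refl)
  next
    case (step y z)
    from step(2) have dz: "distinct y" "distinct z"
      unfolding shuffle_cover_def shuffles_def shuffle_word_def by auto
    from step(2) show ?case unfolding shuffle_cover_def
      using lec_del[of u] lec_ins[of u] step(3) dz by blast
  qed
qed

lemma del_path:
  "shuffle_word M N (xs @ w) \<Longrightarrow> (\<forall>l\<in>set w. \<not> P l \<longrightarrow> is_A l) \<Longrightarrow>
   (shuffle_cover M N)\<^sup>*\<^sup>* (xs @ w) (xs @ filter P w)"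
proof (induction w arbitrary: xs)
  case Nil then show ?case by simp
next
  case (Cons a w)
  show ?case
  proof (cases "P a")
    case True
    then show ?thesis using Cons.IH[of "xs @ [a]"] Cons.prems by simp
  next
    case False
    then obtain i where a: "a = A i" using Cons.prems by (cases a) auto
    have d: "distinct (xs @ a # w)" using Cons.prems unfolding shuffle_word_def by simp
    have "filter (\<lambda>l. l \<noteq> a) (xs @ a # w) = xs @ w" using d by simp
    then have sw: "shuffle_word M N (xs @ w)"
      using shuffle_word_filter[OF Cons.prems(1), of "\<lambda>l. l \<noteq> a"] by simp
    have "shuffle_cover M N (xs @ a # w) (xs @ w)"
      unfolding shuffle_cover_def shuffles_def using sw Cons.prems(1) a by blast
    moreover have "(shuffle_cover M N)\<^sup>*\<^sup>* (xs @ w) (xs @ filter P w)"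
      using Cons.IH[OF sw] Cons.prems(2) by simp
    ultimately show ?thesis using False by (simp add: converse_rtranclp_into_rtranclp)
  qed
qed

lemma ins_path:
  "shuffle_word M N (xs @ w) \<Longrightarrow> (\<forall>l\<in>set w. \<not> P l \<longrightarrow> \<not> is_A l) \<Longrightarrow>
   (shuffle_cover M N)\<^sup>*\<^sup>* (xs @ filter P w) (xs @ w)"
proof (induction w arbitrary: xs)
  case Nil then show ?case by simp
next
  case (Cons a w)
  show ?case
  proof (cases "P a")
    case True
    then show ?thesis using Cons.IH[of "xs @ [a]"] Cons.prems by simp
  next
    case False
    then obtain j where a: "a = X j" using Cons.prems by (cases a) auto
    have d: "distinct (xs @ a # w)" using Cons.prems unfolding shuffle_word_def by simp
    have "filter (\<lambda>l. l \<noteq> a) (xs @ a # w) = xs @ w" using d by simp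
    then have sw: "shuffle_word M N (xs @ w)"
      using shuffle_word_filter[OF Cons.prems(1), of "\<lambda>l. l \<noteq> a"] by simp
    have "shuffle_cover M N (xs @ w) (xs @ a # w)"
      unfolding shuffle_cover_def shuffles_def using sw Cons.prems(1) a by blast
    moreover have "(shuffle_cover M N)\<^sup>*\<^sup>* (xs @ filter P w) (xs @ w)"
      using Cons.IH[OF sw] Cons.prems(2) by simp
    ultimately show ?thesis using False by (simp add: rtranclp.rtrancl_into_rtrancl)
  qed
qed

lemma le_char: "shuffle_le M N u w \<longleftrightarrow> shuffle_word M N u \<and> shuffle_word M N w \<and> lec u w"
proof
  assume "shuffle_le M N u w"
  then show "shuffle_word M N u \<and> shuffle_word M N w \<and> lec u w"
    using cover_lec unfolding shuffle_le_def shuffles_def by auto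
next
  assume H: "shuffle_word M N u \<and> shuffle_word M N w \<and> lec u w"
  have u: "shuffle_word M N u" and w: "shuffle_word M N w" and l: "lec u w" using H by auto
  have c1: "\<forall>l\<in>set u. \<not> l \<in> set w \<longrightarrow> is_A l" using l unfolding lec_def by blast
  have c2: "\<forall>l\<in>set w. \<not> l \<in> set u \<longrightarrow> \<not> is_A l" using l unfolding lec_def by blast
  have e: "filter (\<lambda>l. l \<in> set w) u = filter (\<lambda>l. l \<in> set u) w"
    using l unfolding lec_def by blast
  have p1: "(shuffle_cover M N)\<^sup>*\<^sup>* u (filter (\<lambda>l. l \<in> set w) u)"
    using del_path[of M N "[]" u "\<lambda>l. l \<in> set w"] u c1 by simp
  have p2: "(shuffle_cover M N)\<^sup>*\<^sup>* (filter (\<lambda>l. l \<in> set u) w) w"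
    using ins_path[of M N "[]" w "\<lambda>l. l \<in> set u"] w c2 by simp
  have "(shuffle_cover M N)\<^sup>*\<^sup>* u w" using p1 p2 e rtranclp_trans by metis
  then show "shuffle_le M N u w" using u w unfolding shuffle_le_def shuffles_def by simp
qed



lemma sorted_wrt_cong_set:
  "(\<And>x y. x \<in> set xs \<Longrightarrow> y \<in> set xs \<Longrightarrow> P x y = Q x y) \<Longrightarrow> sorted_wrt P xs = sorted_wrt Q xs"
  by (induction xs) auto

lemma ok_map:
  assumes inj: "inj_on \<psi> (set x)" and kind: "\<And>l. l \<in> set x \<Longrightarrow> is_A (\<psi> l) = is_A l"
    and ord: "\<And>l l'. l \<in> set x \<Longrightarrow> l' \<in> set x \<Longrightarrow> is_A l = is_A l' \<Longrightarrow>
                 (idx (\<psi> l) < idx (\<psi> l')) = (idx l < idx l')"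
  shows "ok (map \<psi> x) \<longleftrightarrow> ok x"
proof -
  have "sorted_wrt R (map \<psi> x) = sorted_wrt (\<lambda>a b. R (\<psi> a) (\<psi> b)) x" by (rule sorted_wrt_map)
  also have "\<dots> = sorted_wrt R x"
    by (rule sorted_wrt_cong_set) (auto simp: R_def kind ord)
  finally show ?thesis unfolding ok_def using distinct_map inj by (simp add: distinct_map)
qed

lemma filter_map_mem:
  assumes "inj_on \<psi> (set x \<union> set y)"
  shows "filter (\<lambda>l. l \<in> set (map \<psi> y)) (map \<psi> x) = map \<psi> (filter (\<lambda>l. l \<in> set y) x)"
proof -
  have "filter (\<lambda>l. l \<in> set (map \<psi> y)) (map \<psi> x) = map \<psi> (filter (\<lambda>l. \<psi> l \<in> \<psi> ` set y) x)"
    by (simp add: filter_map comp_def)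
  also have "filter (\<lambda>l. \<psi> l \<in> \<psi> ` set y) x = filter (\<lambda>l. l \<in> set y) x"
    using assms by (intro filter_cong) (auto simp: inj_on_def)
  finally show ?thesis .
qed

lemma lec_map:
  assumes inj: "inj_on \<psi> (set x \<union> set y)" and kind: "\<And>l. l \<in> set x \<union> set y \<Longrightarrow> is_A (\<psi> l) = is_A l"
  shows "lec (map \<psi> x) (map \<psi> y) \<longleftrightarrow> lec x y"
proof -
  have f1: "filter (\<lambda>l. l \<in> set (map \<psi> y)) (map \<psi> x) = map \<psi> (filter (\<lambda>l. l \<in> set y) x)"
    using filter_map_mem[OF inj] .
  have f2: "filter (\<lambda>l. l \<in> set (map \<psi> x)) (map \<psi> y) = map \<psi> (filter (\<lambda>l. l \<in> set x) y)"
    using filter_map_mem[of \<psi> y x] inj by (simp add: Un_commute)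
  have f3: "(map \<psi> (filter (\<lambda>l. l \<in> set y) x) = map \<psi> (filter (\<lambda>l. l \<in> set x) y)) \<longleftrightarrow>
     filter (\<lambda>l. l \<in> set y) x = filter (\<lambda>l. l \<in> set x) y"
    by (rule inj_on_map_eq_map) (rule inj_on_subset[OF inj], auto)
  have c1: "(\<forall>l\<in>set (map \<psi> y). is_A l \<longrightarrow> l \<in> set (map \<psi> x)) \<longleftrightarrow> (\<forall>l\<in>set y. is_A l \<longrightarrow> l \<in> set x)"
  proof -
    have "\<And>l. l \<in> set y \<Longrightarrow> (\<psi> l \<in> \<psi> ` set x) = (l \<in> set x)"
      using inj unfolding inj_on_def by auto
    then show ?thesis using kind by auto
  qed
  have c2: "(\<forall>l\<in>set (map \<psi> x). \<not> is_A l \<longrightarrow> l \<in> set (map \<psi> y)) \<longleftrightarrow> (\<forall>l\<in>set x. \<not> is_A l \<longrightarrow> l \<in> set y)"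
  proof -
    have "\<And>l. l \<in> set x \<Longrightarrow> (\<psi> l \<in> \<psi> ` set y) = (l \<in> set y)"
      using inj unfolding inj_on_def by auto
    then show ?thesis using kind by auto
  qed
  show ?thesis unfolding lec_def f1 f2 f3 c1 c2 ..
qed

lemma same_kind_eq:
  assumes "\<forall>l\<in>set xs \<union> set ys. is_A l = b" "sorted_wrt R xs" "sorted_wrt R ys" "set xs = set ys"
  shows "xs = ys"
proof -
  have s: "sorted_wrt (<) (map idx zs)" if "sorted_wrt R zs" "\<forall>l\<in>set zs. is_A l = b" for zs
  proof -
    have "sorted_wrt (\<lambda>a c. idx a < idx c) zs = sorted_wrt R zs"
      by (rule sorted_wrt_cong_set) (use that in \<open>auto simp: R_def\<close>)
    then show ?thesis using that by (simp add: sorted_wrt_map)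
  qed
  have "map idx xs = map idx ys"
    using s[of xs] s[of ys] assms sorted_distinct_set_unique strict_sorted_iff
    by (metis Un_iff list.set_map)
  moreover have "inj_on idx (set xs \<union> set ys)"
  proof (rule inj_onI)
    fix a c assume "a \<in> set xs \<union> set ys" "c \<in> set xs \<union> set ys" "idx a = idx c"
    moreover have "is_A a = is_A c" using assms(1) calculation(1,2) by auto
    ultimately show "a = c" by (cases a; cases c) auto
  qed
  ultimately show ?thesis using inj_on_map_eq_map by blast
qed

lemma allA_lec:
  assumes uA: "\<forall>l\<in>set u. is_A l" and wX: "\<forall>l\<in>set w. \<not> is_A l" and "ok u" "ok w" "ok v"
    and sv: "set v \<subseteq> set u \<union> set w"
  shows "lec u v \<and> lec v w"
proof
  have su: "sorted_wrt R u" "sorted_wrt R w" "sorted_wrt R v" using assms unfolding ok_def by auto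
  show "lec u v" unfolding lec_def
  proof (intro conjI)
    show "\<forall>l\<in>set v. is_A l \<longrightarrow> l \<in> set u" using sv wX by auto
    show "\<forall>l\<in>set u. \<not> is_A l \<longrightarrow> l \<in> set v" using uA by auto
    show "filter (\<lambda>l. l \<in> set v) u = filter (\<lambda>l. l \<in> set u) v"
      by (rule same_kind_eq[where b=True]) (use uA su in \<open>auto simp: sorted_wrt_filter\<close>)
  qed
  show "lec v w" unfolding lec_def
  proof (intro conjI)
    show "\<forall>l\<in>set w. is_A l \<longrightarrow> l \<in> set v" using wX by auto
    show "\<forall>l\<in>set v. \<not> is_A l \<longrightarrow> l \<in> set w" using sv uA by auto
    show "filter (\<lambda>l. l \<in> set w) v = filter (\<lambda>l. l \<in> set v) w"
      by (rule same_kind_eq[where b=False]) (use wX su in \<open>auto simp: sorted_wrt_filter\<close>)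
  qed
qed

definition Iv :: "letter list \<Rightarrow> letter list \<Rightarrow> letter list set" where
  "Iv u w = {v. ok v \<and> lec u v \<and> lec v w}"

lemma Iv_set: "v \<in> Iv u w \<Longrightarrow> set v \<subseteq> set u \<union> set w"
  unfolding Iv_def lec_def by blast

lemma nth_ord:
  assumes "sorted_wrt R xs" "\<forall>l\<in>set xs. is_A l = b" "a < length xs" "c < length xs"
  shows "(idx (xs ! a) < idx (xs ! c)) = (a < c)"
proof -
  have *: "idx (xs ! p) < idx (xs ! q)" if "p < q" "q < length xs" for p q
  proof -
    have "R (xs ! p) (xs ! q)" using sorted_wrt_nth_less[OF assms(1) that] .
    moreover have "is_A (xs ! p) = b" "is_A (xs ! q) = b" using assms(2) that by auto
    ultimately show ?thesis unfolding R_def by auto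
  qed
  show ?thesis
  proof (cases "a < c")
    case True then show ?thesis using * assms by auto
  next
    case False
    then have "c < a \<or> c = a" by auto
    then show ?thesis using *[of c a] assms False by auto
  qed
qed

lemma base:
  assumes uA: "\<forall>l\<in>set u. is_A l" and wX: "\<forall>l\<in>set w. \<not> is_A l" and ou: "ok u" and ow: "ok w"
  shows "\<exists>g. bij_betw g (shuffles (length u) (length w)) (Iv u w) \<and>
     (\<forall>x\<in>shuffles (length u) (length w). \<forall>y\<in>shuffles (length u) (length w).
        shuffle_le (length u) (length w) x y \<longleftrightarrow> lec (g x) (g y))"
proof -
  define m where "m = length u"
  define n where "n = length w"
  define \<psi> where "\<psi> l = (case l of A i \<Rightarrow> u ! (i - 1) | X j \<Rightarrow> w ! (j - 1))" for l
  define L where "L = Lset m n"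
  have du: "distinct u" and dw: "distinct w" and su: "sorted_wrt R u" and sw: "sorted_wrt R w"
    using ou ow unfolding ok_def by auto
  have im: "\<psi> ` L = set u \<union> set w"
  proof
    show "\<psi> ` L \<subseteq> set u \<union> set w"
      unfolding L_def Lset_def \<psi>_def m_def n_def by auto
    show "set u \<union> set w \<subseteq> \<psi> ` L"
    proof
      fix l assume "l \<in> set u \<union> set w"
      then show "l \<in> \<psi> ` L"
      proof
        assume "l \<in> set u"
        then obtain k where k: "k < m" "u ! k = l" unfolding m_def by (auto simp: in_set_conv_nth)
        then have "A (Suc k) \<in> L" "\<psi> (A (Suc k)) = l" unfolding L_def Lset_def \<psi>_def by auto
        then show ?thesis by blast
      next
        assume "l \<in> set w"
        then obtain k where k: "k < n" "w ! k = l" unfolding n_def by (auto simp: in_set_conv_nth)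
        then have "X (Suc k) \<in> L" "\<psi> (X (Suc k)) = l" unfolding L_def Lset_def \<psi>_def by auto
        then show ?thesis by blast
      qed
    qed
  qed
  have kind: "is_A (\<psi> l) = is_A l" if "l \<in> L" for l
    using that uA wX unfolding L_def Lset_def \<psi>_def m_def n_def by auto
  have ord: "(idx (\<psi> l) < idx (\<psi> l')) = (idx l < idx l')"
    if H: "l \<in> L" "l' \<in> L" "is_A l = is_A l'" for l l'
  proof -
    show ?thesis
    proof (cases l)
      case (A i)
      then obtain j where l': "l' = A j" using H(3) by (cases l') auto
      have "1 \<le> i" "i \<le> m" "1 \<le> j" "j \<le> m" using H(1,2) A l' unfolding L_def Lset_def by auto
      then show ?thesis using nth_ord[OF su, of True "i - 1" "j - 1"] uA A l' unfolding \<psi>_def m_def by auto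
    next
      case (X i)
      then obtain j where l': "l' = X j" using H(3) by (cases l') auto
      have "1 \<le> i" "i \<le> n" "1 \<le> j" "j \<le> n" using H(1,2) X l' unfolding L_def Lset_def by auto
      then show ?thesis using nth_ord[OF sw, of False "i - 1" "j - 1"] wX X l' unfolding \<psi>_def n_def by auto
    qed
  qed
  have inj: "inj_on \<psi> L"
  proof (rule inj_onI)
    fix l l' assume H: "l \<in> L" "l' \<in> L" "\<psi> l = \<psi> l'"
    then have "is_A l = is_A l'" using kind by metis
    then have "\<not> idx l < idx l'" "\<not> idx l' < idx l" using ord H by (metis order_less_irrefl)+
    then have "idx l = idx l'" by auto
    with \<open>is_A l = is_A l'\<close> show "l = l'" by (cases l; cases l') auto
  qed
  have shw: "x \<in> shuffles m n \<longleftrightarrow> ok x \<and> set x \<subseteq> L" for x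
    unfolding shuffles_def L_def by (simp add: shuffle_word_ok)
  have okm: "ok (map \<psi> x) \<longleftrightarrow> ok x" if "set x \<subseteq> L" for x
  proof (rule ok_map)
    show "inj_on \<psi> (set x)" using inj_on_subset[OF inj that] .
    show "\<And>l. l \<in> set x \<Longrightarrow> is_A (\<psi> l) = is_A l" using kind that by auto
    show "\<And>l l'. l \<in> set x \<Longrightarrow> l' \<in> set x \<Longrightarrow> is_A l = is_A l' \<Longrightarrow>
       (idx (\<psi> l) < idx (\<psi> l')) = (idx l < idx l')" using ord that by blast
  qed
  have into: "map \<psi> x \<in> Iv u w" if "x \<in> shuffles m n" for x
  proof -
    have x: "ok x" "set x \<subseteq> L" using that shw by auto
    have "ok (map \<psi> x)" using okm x by auto
    moreover have "set (map \<psi> x) \<subseteq> set u \<union> set w"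
      using x(2) im by (metis image_mono set_map)
    ultimately show ?thesis using allA_lec[OF uA wX ou ow] unfolding Iv_def by auto
  qed
  have bij: "bij_betw (map \<psi>) (shuffles m n) (Iv u w)"
  proof (rule bij_betw_imageI)
    show "inj_on (map \<psi>) (shuffles m n)"
    proof (rule inj_onI)
      fix x y assume "x \<in> shuffles m n" "y \<in> shuffles m n" "map \<psi> x = map \<psi> y"
      then show "x = y" using inj_on_map_eq_map[of \<psi> x y] inj_on_subset[OF inj] shw by auto
    qed
    show "map \<psi> ` shuffles m n = Iv u w"
    proof
      show "map \<psi> ` shuffles m n \<subseteq> Iv u w" using into by auto
      show "Iv u w \<subseteq> map \<psi> ` shuffles m n"
      proof
        fix v assume v: "v \<in> Iv u w"
        define x where "x = map (inv_into L \<psi>) v"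
        have sv: "set v \<subseteq> \<psi> ` L" using Iv_set[OF v] im by auto
        have sx: "set x \<subseteq> L" unfolding x_def using sv by (auto intro: inv_into_into)
        have mx: "map \<psi> x = v" unfolding x_def using sv by (simp add: map_idI f_inv_into_f subset_iff)
        have "ok x" using okm[OF sx] mx v unfolding Iv_def by auto
        then have "x \<in> shuffles m n" using shw sx by auto
        then show "v \<in> map \<psi> ` shuffles m n" using mx by auto
      qed
    qed
  qed
  have ordr: "shuffle_le m n x y \<longleftrightarrow> lec (map \<psi> x) (map \<psi> y)"
    if "x \<in> shuffles m n" "y \<in> shuffles m n" for x y
  proof -
    have "lec (map \<psi> x) (map \<psi> y) \<longleftrightarrow> lec x y"
      by (rule lec_map) (use that shw inj_on_subset[OF inj] kind in auto)
    then show ?thesis using that le_char unfolding shuffles_def by auto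
  qed
  show ?thesis using bij ordr unfolding m_def n_def by blast
qed



lemma lec_split:
  assumes D: "(set a \<union> set a') \<inter> (set b \<union> set b') = {}"
    and c: "c \<notin> set a \<union> set a' \<union> set b \<union> set b'"
  shows "lec (a @ c # b) (a' @ c # b') \<longleftrightarrow> lec a a' \<and> lec b b'"
proof -
  have f1: "filter (\<lambda>l. l \<in> set (a' @ c # b')) (a @ c # b) =
      filter (\<lambda>l. l \<in> set a') a @ c # filter (\<lambda>l. l \<in> set b') b"
  proof -
    have "filter (\<lambda>l. l \<in> set (a' @ c # b')) a = filter (\<lambda>l. l \<in> set a') a"
      using D c by (intro filter_cong) auto
    moreover have "filter (\<lambda>l. l \<in> set (a' @ c # b')) b = filter (\<lambda>l. l \<in> set b') b"
      using D c by (intro filter_cong) auto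
    ultimately show ?thesis by simp
  qed
  have f2: "filter (\<lambda>l. l \<in> set (a @ c # b)) (a' @ c # b') =
      filter (\<lambda>l. l \<in> set a) a' @ c # filter (\<lambda>l. l \<in> set b) b'"
  proof -
    have "filter (\<lambda>l. l \<in> set (a @ c # b)) a' = filter (\<lambda>l. l \<in> set a) a'"
      using D c by (intro filter_cong) auto
    moreover have "filter (\<lambda>l. l \<in> set (a @ c # b)) b' = filter (\<lambda>l. l \<in> set b) b'"
      using D c by (intro filter_cong) auto
    ultimately show ?thesis by simp
  qed
  have f3: "(filter (\<lambda>l. l \<in> set a') a @ c # filter (\<lambda>l. l \<in> set b') b =
      filter (\<lambda>l. l \<in> set a) a' @ c # filter (\<lambda>l. l \<in> set b) b') \<longleftrightarrow>
      (filter (\<lambda>l. l \<in> set a') a = filter (\<lambda>l. l \<in> set a) a' \<and>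
       filter (\<lambda>l. l \<in> set b') b = filter (\<lambda>l. l \<in> set b) b')"
    by (rule append_Cons_eq_iff) (use c in auto)
  have c1: "(\<forall>l\<in>set (a' @ c # b'). is_A l \<longrightarrow> l \<in> set (a @ c # b)) \<longleftrightarrow>
     (\<forall>l\<in>set a'. is_A l \<longrightarrow> l \<in> set a) \<and> (\<forall>l\<in>set b'. is_A l \<longrightarrow> l \<in> set b)"
    using D c by auto
  have c2: "(\<forall>l\<in>set (a @ c # b). \<not> is_A l \<longrightarrow> l \<in> set (a' @ c # b')) \<longleftrightarrow>
     (\<forall>l\<in>set a. \<not> is_A l \<longrightarrow> l \<in> set a') \<and> (\<forall>l\<in>set b. \<not> is_A l \<longrightarrow> l \<in> set b')"
    using D c by auto
  show ?thesis unfolding lec_def f1 f2 f3 c1 c2 by blast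
qed

lemma lecD:
  assumes "lec u v"
  shows "\<forall>l\<in>set v. is_A l \<longrightarrow> l \<in> set u" "\<forall>l\<in>set u. \<not> is_A l \<longrightarrow> l \<in> set v"
    "filter (\<lambda>l. l \<in> set v) u = filter (\<lambda>l. l \<in> set u) v"
  using assms unfolding lec_def by simp_all

lemma IvD: "v \<in> Iv u w \<Longrightarrow> ok v \<and> lec u v \<and> lec v w"
  unfolding Iv_def by simp

lemma ok_append: "ok (a @ c # b) \<Longrightarrow> ok a \<and> ok b"
  unfolding ok_def by (simp add: sorted_wrt_append)

lemma sorted_R_mid:
  assumes "sorted_wrt R (u1 @ c # u2)" "x \<in> insert c (set u1)" "y \<in> insert c (set u2)" "x \<noteq> y"
  shows "R x y"
  using assms by (auto simp: sorted_wrt_append)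

lemma step:
  assumes ou: "ok (u1 @ c # u2)" and ow: "ok (w1 @ c # w2)"
    and l: "lec (u1 @ c # u2) (w1 @ c # w2)"
    and d1: "set u1 \<inter> set (w1 @ c # w2) = {}" and d2: "set w1 \<inter> set (u1 @ c # u2) = {}"
  shows "lec u1 w1" "lec u2 w2" "ok u1" "ok u2" "ok w1" "ok w2"
    "bij_betw (\<lambda>(v1, v2). v1 @ c # v2) (Iv u1 w1 \<times> Iv u2 w2) (Iv (u1 @ c # u2) (w1 @ c # w2))"
    "\<forall>p\<in>Iv u1 w1 \<times> Iv u2 w2. \<forall>q\<in>Iv u1 w1 \<times> Iv u2 w2.
       lec ((\<lambda>(v1, v2). v1 @ c # v2) p) ((\<lambda>(v1, v2). v1 @ c # v2) q) \<longleftrightarrow>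
       lec (fst p) (fst q) \<and> lec (snd p) (snd q)"
proof -
  let ?U = "u1 @ c # u2" and ?W = "w1 @ c # w2"
  have du: "distinct ?U" and dw: "distinct ?W" using ou ow unfolding ok_def by auto
  have D: "(set u1 \<union> set w1) \<inter> (set u2 \<union> set w2) = {}"
  proof -
    have "set u1 \<inter> set u2 = {}" using du by auto
    moreover have "set w1 \<inter> set w2 = {}" using dw by auto
    moreover have "set u1 \<inter> set w2 = {}" using d1 by auto
    moreover have "set w1 \<inter> set u2 = {}" using d2 by auto
    ultimately show ?thesis by blast
  qed
  have C: "c \<notin> set u1 \<union> set w1 \<union> set u2 \<union> set w2" using du dw by auto
  have lw: "lec u1 w1 \<and> lec u2 w2" using lec_split[OF D C] l by blast
  then show "lec u1 w1" "lec u2 w2" by auto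
  show "ok u1" "ok u2" using ok_append[OF ou] by auto
  show "ok w1" "ok w2" using ok_append[OF ow] by auto
  have suR: "sorted_wrt R ?U" and swR: "sorted_wrt R ?W" using ou ow unfolding ok_def by auto
  have into: "v1 @ c # v2 \<in> Iv ?U ?W" if v1: "v1 \<in> Iv u1 w1" and v2: "v2 \<in> Iv u2 w2" for v1 v2
  proof -
    have s1: "set v1 \<subseteq> set u1 \<union> set w1" and s2: "set v2 \<subseteq> set u2 \<union> set w2"
      using Iv_set v1 v2 by auto
    have D1: "(set u1 \<union> set v1) \<inter> (set u2 \<union> set v2) = {}" using D s1 s2 by auto
    have C1: "c \<notin> set u1 \<union> set v1 \<union> set u2 \<union> set v2" using C s1 s2 by auto
    have D2: "(set v1 \<union> set w1) \<inter> (set v2 \<union> set w2) = {}" using D s1 s2 by auto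
    have C2: "c \<notin> set v1 \<union> set w1 \<union> set v2 \<union> set w2" using C s1 s2 by auto
    have "lec ?U (v1 @ c # v2)" using lec_split[OF D1 C1] v1 v2 unfolding Iv_def by blast
    moreover have "lec (v1 @ c # v2) ?W" using lec_split[OF D2 C2] v1 v2 unfolding Iv_def by blast
    moreover have "ok (v1 @ c # v2)"
    proof -
      have o1: "distinct v1" "sorted_wrt R v1" and o2: "distinct v2" "sorted_wrt R v2"
        using v1 v2 unfolding Iv_def ok_def by auto
      have l1: "lec u1 v1" "lec v1 w1" using IvD[OF v1] by auto
      have A1: "\<forall>l\<in>set v1. is_A l \<longrightarrow> l \<in> set u1" by (rule lecD(1)[OF l1(1)])
      have X1: "\<forall>l\<in>set v1. \<not> is_A l \<longrightarrow> l \<in> set w1" by (rule lecD(2)[OF l1(2)])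
      have l2: "lec u2 v2" "lec v2 w2" using IvD[OF v2] by auto
      have A2: "\<forall>l\<in>set v2. is_A l \<longrightarrow> l \<in> set u2" by (rule lecD(1)[OF l2(1)])
      have X2: "\<forall>l\<in>set v2. \<not> is_A l \<longrightarrow> l \<in> set w2" by (rule lecD(2)[OF l2(2)])
      have cross: "R x y" if xy: "x \<in> insert c (set v1)" "y \<in> insert c (set v2)" "x \<noteq> y" for x y
      proof (cases "is_A x = is_A y")
        case False then show ?thesis unfolding R_def by auto
      next
        case True
        show ?thesis
        proof (cases "is_A x")
          case True
          have "x \<in> insert c (set u1)" using xy(1) A1 True by blast
          moreover have "y \<in> insert c (set u2)" using xy(2) A2 True \<open>is_A x = is_A y\<close> by auto
          ultimately show ?thesis using sorted_R_mid[OF suR] xy(3) by blast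
        next
          case False
          have "x \<in> insert c (set w1)" using xy(1) X1 False by blast
          moreover have "y \<in> insert c (set w2)" using xy(2) X2 False \<open>is_A x = is_A y\<close> by auto
          ultimately show ?thesis using sorted_R_mid[OF swR] xy(3) by blast
        qed
      qed
      have dd: "set v1 \<inter> set v2 = {}" "c \<notin> set v1" "c \<notin> set v2" using D1 C1 by auto
      have "distinct (v1 @ c # v2)" using o1(1) o2(1) dd by auto
      moreover have "sorted_wrt R (v1 @ c # v2)"
      proof -
        have "\<forall>x\<in>set v1. \<forall>y\<in>set (c # v2). R x y" using cross dd by auto
        moreover have "\<forall>y\<in>set v2. R c y" using cross dd by auto
        ultimately show ?thesis using o1(2) o2(2) by (simp add: sorted_wrt_append)
      qed
      ultimately show ?thesis unfolding ok_def by auto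
    qed
    ultimately show ?thesis unfolding Iv_def by auto
  qed
  have surj: "\<exists>v1 v2. v = v1 @ c # v2 \<and> v1 \<in> Iv u1 w1 \<and> v2 \<in> Iv u2 w2" if v: "v \<in> Iv ?U ?W" for v
  proof -
    have ov: "ok v" and lu: "lec ?U v" and lv: "lec v ?W" using v unfolding Iv_def by auto
    have "c \<in> set v"
    proof (cases "is_A c")
      case True then show ?thesis using lecD(1)[OF lv] by simp
    next
      case False then show ?thesis using lecD(2)[OF lu] by simp
    qed
    then obtain v1 v2 where vv: "v = v1 @ c # v2" by (meson split_list)
    have dv: "distinct v" using ov unfolding ok_def by auto
    have cv: "c \<notin> set v1" "c \<notin> set v2" using dv vv by auto
    have eU: "filter (\<lambda>l. l \<in> set v) ?U = filter (\<lambda>l. l \<in> set ?U) v" by (rule lecD(3)[OF lu])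
    have eU': "filter (\<lambda>l. l \<in> set v) u1 @ c # filter (\<lambda>l. l \<in> set v) u2 =
       filter (\<lambda>l. l \<in> set ?U) v1 @ c # filter (\<lambda>l. l \<in> set ?U) v2"
      using eU \<open>c \<in> set v\<close> vv by simp
    have eU'': "filter (\<lambda>l. l \<in> set v) u1 = filter (\<lambda>l. l \<in> set ?U) v1 \<and>
                filter (\<lambda>l. l \<in> set v) u2 = filter (\<lambda>l. l \<in> set ?U) v2"
      using append_Cons_eq_iff[of c "filter (\<lambda>l. l \<in> set v) u1" "filter (\<lambda>l. l \<in> set v) u2"] eU' C
      by auto
    have eW: "filter (\<lambda>l. l \<in> set ?W) v = filter (\<lambda>l. l \<in> set v) ?W" by (rule lecD(3)[OF lv])
    have eW': "filter (\<lambda>l. l \<in> set ?W) v1 @ c # filter (\<lambda>l. l \<in> set ?W) v2 =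
       filter (\<lambda>l. l \<in> set v) w1 @ c # filter (\<lambda>l. l \<in> set v) w2"
      using eW \<open>c \<in> set v\<close> vv by simp
    have eW'': "filter (\<lambda>l. l \<in> set ?W) v1 = filter (\<lambda>l. l \<in> set v) w1 \<and>
                filter (\<lambda>l. l \<in> set ?W) v2 = filter (\<lambda>l. l \<in> set v) w2"
      using append_Cons_eq_iff[of c "filter (\<lambda>l. l \<in> set ?W) v1" "filter (\<lambda>l. l \<in> set ?W) v2"] eW' cv
      by auto
    have sv: "set v \<subseteq> set ?U \<union> set ?W" using Iv_set[OF v] .
    have s1: "set v1 \<subseteq> set u1 \<union> set w1"
    proof
      fix l assume l1: "l \<in> set v1"
      then have "l \<in> set ?U \<or> l \<in> set ?W" using sv vv by auto
      then show "l \<in> set u1 \<union> set w1"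
      proof
        assume "l \<in> set ?U"
        then have "l \<in> set (filter (\<lambda>l. l \<in> set ?U) v1)" using l1 by auto
        then show ?thesis using eU'' by (metis UnI1 filter_is_subset subsetD)
      next
        assume "l \<in> set ?W"
        then have "l \<in> set (filter (\<lambda>l. l \<in> set ?W) v1)" using l1 by auto
        then show ?thesis using eW'' by (metis UnI2 filter_is_subset subsetD)
      qed
    qed
    have s2: "set v2 \<subseteq> set u2 \<union> set w2"
    proof
      fix l assume l1: "l \<in> set v2"
      then have "l \<in> set ?U \<or> l \<in> set ?W" using sv vv by auto
      then show "l \<in> set u2 \<union> set w2"
      proof
        assume "l \<in> set ?U"
        then have "l \<in> set (filter (\<lambda>l. l \<in> set ?U) v2)" using l1 by auto
        then show ?thesis using eU'' by (metis UnI1 filter_is_subset subsetD)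
      next
        assume "l \<in> set ?W"
        then have "l \<in> set (filter (\<lambda>l. l \<in> set ?W) v2)" using l1 by auto
        then show ?thesis using eW'' by (metis UnI2 filter_is_subset subsetD)
      qed
    qed
    have D1: "(set u1 \<union> set v1) \<inter> (set u2 \<union> set v2) = {}" using D s1 s2 by auto
    have C1: "c \<notin> set u1 \<union> set v1 \<union> set u2 \<union> set v2" using C s1 s2 by auto
    have D2: "(set v1 \<union> set w1) \<inter> (set v2 \<union> set w2) = {}" using D s1 s2 by auto
    have C2: "c \<notin> set v1 \<union> set w1 \<union> set v2 \<union> set w2" using C s1 s2 by auto
    have "lec u1 v1 \<and> lec u2 v2" using lec_split[OF D1 C1] lu vv by blast
    moreover have "lec v1 w1 \<and> lec v2 w2" using lec_split[OF D2 C2] lv vv by blast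
    moreover have "ok v1 \<and> ok v2" using ok_append[of v1 c v2] ov vv by blast
    ultimately show ?thesis using vv unfolding Iv_def by auto
  qed
  show "bij_betw (\<lambda>(v1, v2). v1 @ c # v2) (Iv u1 w1 \<times> Iv u2 w2) (Iv ?U ?W)"
  proof (rule bij_betw_imageI)
    show "inj_on (\<lambda>(v1, v2). v1 @ c # v2) (Iv u1 w1 \<times> Iv u2 w2)"
    proof (rule inj_onI, clarify)
      fix a b a' b' assume H: "a \<in> Iv u1 w1" "b \<in> Iv u2 w2" "a' \<in> Iv u1 w1" "b' \<in> Iv u2 w2"
        "a @ c # b = a' @ c # b'"
      have "c \<notin> set a" "c \<notin> set b" using Iv_set[OF H(1)] Iv_set[OF H(2)] C by auto
      then show "a = a' \<and> b = b'" using append_Cons_eq_iff H(5) by metis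
    qed
    show "(\<lambda>(v1, v2). v1 @ c # v2) ` (Iv u1 w1 \<times> Iv u2 w2) = Iv ?U ?W"
      using into surj by fastforce
  qed
  show "\<forall>p\<in>Iv u1 w1 \<times> Iv u2 w2. \<forall>q\<in>Iv u1 w1 \<times> Iv u2 w2.
       lec ((\<lambda>(v1, v2). v1 @ c # v2) p) ((\<lambda>(v1, v2). v1 @ c # v2) q) \<longleftrightarrow>
       lec (fst p) (fst q) \<and> lec (snd p) (snd q)"
  proof (clarify)
    fix a b a' b' assume H: "a \<in> Iv u1 w1" "b \<in> Iv u2 w2" "a' \<in> Iv u1 w1" "b' \<in> Iv u2 w2"
    have "(set a \<union> set a') \<inter> (set b \<union> set b') = {}" "c \<notin> set a \<union> set a' \<union> set b \<union> set b'"
      using Iv_set[OF H(1)] Iv_set[OF H(2)] Iv_set[OF H(3)] Iv_set[OF H(4)] C D by auto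
    then show "lec (a @ c # b) (a' @ c # b') \<longleftrightarrow> lec (fst (a, b)) (fst (a', b')) \<and> lec (snd (a, b)) (snd (a', b'))"
      using lec_split by simp
  qed
qed




lemma prod_mem_cons:
  "x # xs \<in> prod_shuffles (d # ds) \<longleftrightarrow> x \<in> shuffles (fst d) (snd d) \<and> xs \<in> prod_shuffles ds"
  unfolding prod_shuffles_def by (auto simp: less_Suc_eq_0_disj)

lemma prod_mem_cons': "ws \<in> prod_shuffles (d # ds) \<Longrightarrow> \<exists>x xs. ws = x # xs"
  unfolding prod_shuffles_def by (cases ws) auto

lemma prod_le_cons:
  "prod_le (d # ds) (x # xs) (y # ys) \<longleftrightarrow>
     x # xs \<in> prod_shuffles (d # ds) \<and> y # ys \<in> prod_shuffles (d # ds) \<and>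
     shuffle_le (fst d) (snd d) x y \<and> prod_le ds xs ys"
  unfolding prod_le_def prod_mem_cons by (auto simp: less_Suc_eq_0_disj)

lemma prod_nil: "prod_shuffles [] = {[]}" "prod_le [] [] []"
  unfolding prod_shuffles_def prod_le_def by auto

lemma prod_cons_bij:
  "bij_betw (\<lambda>ws. (hd ws, tl ws)) (prod_shuffles (d # ds)) (shuffles (fst d) (snd d) \<times> prod_shuffles ds)"
proof (rule bij_betw_imageI)
  show "inj_on (\<lambda>ws. (hd ws, tl ws)) (prod_shuffles (d # ds))"
    by (rule inj_onI) (metis list.collapse prod_mem_cons' list.distinct(1) prod.inject)
  show "(\<lambda>ws. (hd ws, tl ws)) ` prod_shuffles (d # ds) = shuffles (fst d) (snd d) \<times> prod_shuffles ds"
  proof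
    show "(\<lambda>ws. (hd ws, tl ws)) ` prod_shuffles (d # ds) \<subseteq> shuffles (fst d) (snd d) \<times> prod_shuffles ds"
      using prod_mem_cons prod_mem_cons' by fastforce
    show "shuffles (fst d) (snd d) \<times> prod_shuffles ds \<subseteq> (\<lambda>ws. (hd ws, tl ws)) ` prod_shuffles (d # ds)"
    proof clarify
      fix a b assume "a \<in> shuffles (fst d) (snd d)" "b \<in> prod_shuffles ds"
      then have "a # b \<in> prod_shuffles (d # ds)" using prod_mem_cons by blast
      then show "(a, b) \<in> (\<lambda>ws. (hd ws, tl ws)) ` prod_shuffles (d # ds)" by force
    qed
  qed
qed

lemma prod_cons_le:
  assumes "ws \<in> prod_shuffles (d # ds)" "ws' \<in> prod_shuffles (d # ds)"
  shows "prod_le (d # ds) ws ws' \<longleftrightarrow> shuffle_le (fst d) (snd d) (hd ws) (hd ws') \<and> prod_le ds (tl ws) (tl ws')"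
proof -
  obtain x xs y ys where e: "ws = x # xs" "ws' = y # ys"
    using prod_mem_cons'[OF assms(1)] prod_mem_cons'[OF assms(2)] by blast
  show ?thesis using prod_le_cons[of d ds x xs y ys] assms unfolding e by simp
qed

lemma main:
  "ok u \<Longrightarrow> ok w \<Longrightarrow> lec u w \<Longrightarrow> \<exists>ds g. ds \<noteq> [] \<and> bij_betw g (prod_shuffles ds) (Iv u w) \<and>
     (\<forall>x\<in>prod_shuffles ds. \<forall>y\<in>prod_shuffles ds. prod_le ds x y \<longleftrightarrow> lec (g x) (g y))"
proof (induction "length u" arbitrary: u w rule: less_induct)
  case less
  show ?case
  proof (cases "\<exists>l\<in>set u. l \<in> set w")
    case False
    have uA: "\<forall>l\<in>set u. is_A l" using False less.prems(3) unfolding lec_def by blast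
    have wX: "\<forall>l\<in>set w. \<not> is_A l" using False less.prems(3) unfolding lec_def by blast
    obtain g1 where g1: "bij_betw g1 (shuffles (length u) (length w)) (Iv u w)"
      "\<forall>x\<in>shuffles (length u) (length w). \<forall>y\<in>shuffles (length u) (length w).
        shuffle_le (length u) (length w) x y \<longleftrightarrow> lec (g1 x) (g1 y)"
      using base[OF uA wX less.prems(1,2)] by blast
    define d where "d = (length u, length w)"
    have b0: "bij_betw (\<lambda>ws. (hd ws, tl ws)) (prod_shuffles [d]) (shuffles (length u) (length w) \<times> {[]})"
      using prod_cons_bij[of d "[]"] unfolding d_def prod_nil by simp
    have b1: "bij_betw fst (shuffles (length u) (length w) \<times> {[]}) (shuffles (length u) (length w))"
      unfolding bij_betw_def inj_on_def by force
    have "bij_betw (g1 \<circ> fst \<circ> (\<lambda>ws. (hd ws, tl ws))) (prod_shuffles [d]) (Iv u w)"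
      using bij_betw_trans[OF bij_betw_trans[OF b0 b1] g1(1)] by (simp add: comp_assoc)
    then have bj: "bij_betw (g1 \<circ> hd) (prod_shuffles [d]) (Iv u w)" by (simp add: comp_def)
    have "\<forall>x\<in>prod_shuffles [d]. \<forall>y\<in>prod_shuffles [d]. prod_le [d] x y \<longleftrightarrow> lec ((g1 \<circ> hd) x) ((g1 \<circ> hd) y)"
    proof (intro ballI)
      fix x y assume x: "x \<in> prod_shuffles [d]" and y: "y \<in> prod_shuffles [d]"
      have "hd x \<in> shuffles (length u) (length w)" "hd y \<in> shuffles (length u) (length w)"
        using b0 x y unfolding bij_betw_def by auto
      moreover have "prod_le [] (tl x) (tl y)"
      proof -
        have "length (tl x) = 0" "length (tl y) = 0" using x y unfolding prod_shuffles_def by auto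
        then have "tl x = []" "tl y = []" by (simp_all only: length_0_conv)
        then show ?thesis using prod_nil(2) by simp
      qed
      ultimately show "prod_le [d] x y \<longleftrightarrow> lec ((g1 \<circ> hd) x) ((g1 \<circ> hd) y)"
        using prod_cons_le[OF x y] g1(2) unfolding d_def by auto
    qed
    then show ?thesis using bj by blast
  next
    case True
    then obtain u1 c u2 where u: "u = u1 @ c # u2" and cw: "c \<in> set w" and u1w: "\<forall>y\<in>set u1. y \<notin> set w"
      using split_list_first_prop[of u "\<lambda>l. l \<in> set w"] by blast
    obtain w1 w2 where w: "w = w1 @ c # w2" using cw by (meson split_list)
    have du: "distinct u" and dw: "distinct w" using less.prems unfolding ok_def by auto
    have e: "filter (\<lambda>l. l \<in> set w) u = filter (\<lambda>l. l \<in> set u) w" using less.prems(3) unfolding lec_def by blast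
    have f1: "filter (\<lambda>l. l \<in> set w) u1 = []" using u1w by (simp add: filter_empty_conv)
    have "[] @ c # filter (\<lambda>l. l \<in> set w) u2 = filter (\<lambda>l. l \<in> set u) w1 @ c # filter (\<lambda>l. l \<in> set u) w2"
      using e f1 u w cw by simp
    moreover have "c \<notin> set (filter (\<lambda>l. l \<in> set w) u2)" using du u by auto
    ultimately have "filter (\<lambda>l. l \<in> set u) w1 = []"
      using append_Cons_eq_iff[of c "[]" "filter (\<lambda>l. l \<in> set w) u2"] by auto
    then have w1u: "\<forall>y\<in>set w1. y \<notin> set u" by (simp add: filter_empty_conv)
    have d1: "set u1 \<inter> set (w1 @ c # w2) = {}" using u1w w by auto
    have d2: "set w1 \<inter> set (u1 @ c # u2) = {}" using w1u u by auto
    note st = step[OF less.prems(1)[unfolded u] less.prems(2)[unfolded w] less.prems(3)[unfolded u w] d1 d2]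
    have "length u2 < length u" using u by simp
    then obtain ds2 g2 where ds2: "ds2 \<noteq> []" and g2: "bij_betw g2 (prod_shuffles ds2) (Iv u2 w2)"
      "\<forall>x\<in>prod_shuffles ds2. \<forall>y\<in>prod_shuffles ds2. prod_le ds2 x y \<longleftrightarrow> lec (g2 x) (g2 y)"
      using less.hyps st(4,6,2) by blast
    have uA: "\<forall>l\<in>set u1. is_A l" using u1w less.prems(3) u unfolding lec_def by auto
    have wX: "\<forall>l\<in>set w1. \<not> is_A l" using w1u less.prems(3) w unfolding lec_def by auto
    obtain g1 where g1: "bij_betw g1 (shuffles (length u1) (length w1)) (Iv u1 w1)"
      "\<forall>x\<in>shuffles (length u1) (length w1). \<forall>y\<in>shuffles (length u1) (length w1).
        shuffle_le (length u1) (length w1) x y \<longleftrightarrow> lec (g1 x) (g1 y)"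
      using base[OF uA wX st(3,5)] by blast
    define d where "d = (length u1, length w1)"
    define h where "h = (\<lambda>(v1, v2). v1 @ c # (v2::letter list))"
    define g where "g = h \<circ> map_prod g1 g2 \<circ> (\<lambda>ws. (hd ws, tl ws))"
    have b0: "bij_betw (\<lambda>ws. (hd ws, tl ws)) (prod_shuffles (d # ds2)) (shuffles (length u1) (length w1) \<times> prod_shuffles ds2)"
      using prod_cons_bij[of d ds2] unfolding d_def by simp
    have b1: "bij_betw (map_prod g1 g2) (shuffles (length u1) (length w1) \<times> prod_shuffles ds2) (Iv u1 w1 \<times> Iv u2 w2)"
      by (rule bij_betw_map_prod[OF g1(1) g2(1)])
    have b2: "bij_betw h (Iv u1 w1 \<times> Iv u2 w2) (Iv u w)" unfolding h_def u w by (rule st(7))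
    have bj: "bij_betw g (prod_shuffles (d # ds2)) (Iv u w)"
      unfolding g_def using bij_betw_trans[OF bij_betw_trans[OF b0 b1] b2] by (simp add: comp_assoc)
    have "\<forall>x\<in>prod_shuffles (d # ds2). \<forall>y\<in>prod_shuffles (d # ds2). prod_le (d # ds2) x y \<longleftrightarrow> lec (g x) (g y)"
    proof (intro ballI)
      fix x y assume x: "x \<in> prod_shuffles (d # ds2)" and y: "y \<in> prod_shuffles (d # ds2)"
      have hx: "hd x \<in> shuffles (length u1) (length w1)" "tl x \<in> prod_shuffles ds2"
        and hy: "hd y \<in> shuffles (length u1) (length w1)" "tl y \<in> prod_shuffles ds2"
        using b0 x y unfolding bij_betw_def by auto
      have m: "(g1 (hd x), g2 (tl x)) \<in> Iv u1 w1 \<times> Iv u2 w2" "(g1 (hd y), g2 (tl y)) \<in> Iv u1 w1 \<times> Iv u2 w2"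
        using b1 hx hy unfolding bij_betw_def by auto
      have "prod_le (d # ds2) x y \<longleftrightarrow> shuffle_le (length u1) (length w1) (hd x) (hd y) \<and> prod_le ds2 (tl x) (tl y)"
        using prod_cons_le[OF x y] unfolding d_def by simp
      also have "\<dots> \<longleftrightarrow> lec (g1 (hd x)) (g1 (hd y)) \<and> lec (g2 (tl x)) (g2 (tl y))"
        using g1(2) g2(2) hx hy by auto
      also have "\<dots> \<longleftrightarrow> lec (h (g1 (hd x), g2 (tl x))) (h (g1 (hd y), g2 (tl y)))"
        using st(8) m unfolding h_def u w by auto
      also have "\<dots> \<longleftrightarrow> lec (g x) (g y)" unfolding g_def by simp
      finally show "prod_le (d # ds2) x y \<longleftrightarrow> lec (g x) (g y)" .
    qed
    then show ?thesis using bj by blast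
  qed
qed


theorem lemma2p2:
  fixes M N :: nat and u w :: "letter list"
  assumes "u \<in> shuffles M N" and "w \<in> shuffles M N" and "shuffle_le M N u w"
  shows "\<exists>ds :: (nat \<times> nat) list. length ds \<ge> 1 \<and>
           (\<exists>f. bij_betw f (shuffle_interval M N u w) (prod_shuffles ds) \<and>
                (\<forall>v \<in> shuffle_interval M N u w. \<forall>v' \<in> shuffle_interval M N u w.
                    shuffle_le M N v v' \<longleftrightarrow> prod_le ds (f v) (f v')))"
proof -
  have su: "shuffle_word M N u" and sw: "shuffle_word M N w" and l: "lec u w"
    using le_char assms(3) by auto
  have ou: "ok u" and ow: "ok w" using su sw shuffle_word_ok by auto
  obtain ds g where ds: "ds \<noteq> []" and bij: "bij_betw g (prod_shuffles ds) (Iv u w)"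
    and ord: "\<forall>x\<in>prod_shuffles ds. \<forall>y\<in>prod_shuffles ds. prod_le ds x y \<longleftrightarrow> lec (g x) (g y)"
    using main[OF ou ow l] by blast
  have swv: "shuffle_word M N v" if "v \<in> Iv u w" for v
  proof -
    have "set v \<subseteq> set u \<union> set w" using Iv_set[OF that] .
    moreover have "set u \<subseteq> Lset M N" "set w \<subseteq> Lset M N" using su sw shuffle_word_ok by auto
    moreover have "ok v" using IvD[OF that] by simp
    ultimately show ?thesis using shuffle_word_ok by blast
  qed
  have I: "shuffle_interval M N u w = Iv u w"
  proof
    show "shuffle_interval M N u w \<subseteq> Iv u w"
      unfolding shuffle_interval_def Iv_def using le_char shuffle_word_ok by blast
    show "Iv u w \<subseteq> shuffle_interval M N u w"
    proof
      fix v assume v: "v \<in> Iv u w"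
      have "shuffle_word M N v" using swv[OF v] .
      moreover have "lec u v" "lec v w" using IvD[OF v] by auto
      ultimately show "v \<in> shuffle_interval M N u w"
        unfolding shuffle_interval_def shuffles_def using le_char su sw by blast
    qed
  qed
  define f where "f = inv_into (prod_shuffles ds) g"
  have bf: "bij_betw f (Iv u w) (prod_shuffles ds)" unfolding f_def by (rule bij_betw_inv_into[OF bij])
  have gf: "g (f v) = v" if "v \<in> Iv u w" for v
    unfolding f_def using bij_betw_inv_into_right[OF bij that] .
  have fm: "f v \<in> prod_shuffles ds" if "v \<in> Iv u w" for v
    using bf that unfolding bij_betw_def by auto
  have "\<forall>v \<in> Iv u w. \<forall>v' \<in> Iv u w. shuffle_le M N v v' \<longleftrightarrow> prod_le ds (f v) (f v')"
  proof (intro ballI)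
    fix v v' assume v: "v \<in> Iv u w" and v': "v' \<in> Iv u w"
    have "shuffle_le M N v v' \<longleftrightarrow> lec v v'" using le_char swv[OF v] swv[OF v'] by blast
    also have "\<dots> \<longleftrightarrow> lec (g (f v)) (g (f v'))" using gf v v' by simp
    also have "\<dots> \<longleftrightarrow> prod_le ds (f v) (f v')" using ord fm[OF v] fm[OF v'] by blast
    finally show "shuffle_le M N v v' \<longleftrightarrow> prod_le ds (f v) (f v')" .
  qed
  moreover have "length ds \<ge> 1" using ds by (cases ds) auto
  ultimately show ?thesis using bf unfolding I by blast
qed


end
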